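(* Let $n,r\geq 1$ and $q\geq 1$. Suppose that, for $n$ prisoners, $r$ rooms and $q$ states (all rooms initially in state $0$), there is a symmetric strategy together with a rule by which a prisoner, as a function of their own observation history, designates themselves a leader, such that for every valid schedule exactly one prisoner eventually designates themselves a leader. Then $n$ prisoners have a symmetric winning strategy for $r$ rooms with $q+4$ states, starting with all rooms in state $0$.
   Context: The game: there are $n$ prisoners and $r$ rooms; each room contains a switch that is in one of $q$ states $\{0,1,\ldots,q-1\}$. The initial state of every room is known to the prisoners. A warden leads prisoners into rooms one at a time according to a schedule, i.e. an infinite sequence of (prisoner, room) pairs; a schedule is valid if every prisoner visits every room infinitely often. The rooms are indistinguishable to the prisoners, and prisoners have no information about time or other visits: on each visit a prisoner observes only the current state of the room, may change it to any state, and may declare that all prisoners have visited all rooms. A (deterministic) strategy assigns to each prisoner a rule determining, from the sequence of states that prisoner has observed so far (and their own previous actions), what new state to set and whether to declare. A strategy is winning if for every valid schedule some prisoner eventually declares, and every declaration is made only at a time when every prisoner has already visited every room. A strategy is symmetric if all prisoners follow the same rule (the same function of their own observation history). *)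

theory Defs
  imports Main
begin

(* A symmetric deterministic strategy is a single rule, applied by every prisoner
   to their own observation history (the list of states they have observed so far,
   including the current one; own previous actions are determined by it):
     act  : history => new state of the room
     decl : history => whether to declare. *)

definition valid_schedule :: "nat \<Rightarrow> nat \<Rightarrow> (nat \<Rightarrow> nat \<times> nat) \<Rightarrow> bool" where
  "valid_schedule n r \<sigma> \<longleftrightarrow>
     (\<forall>t. fst (\<sigma> t) < n \<and> snd (\<sigma> t) < r) \<and>
     (\<forall>p<n. \<forall>k<r. \<forall>N. \<exists>t\<ge>N. \<sigma> t = (p, k))"

(* configuration before step t: room states and prisoners' observation histories;
   all rooms start in state 0 *)
fun run :: "(nat list \<Rightarrow> nat) \<Rightarrow> (nat \<Rightarrow> nat \<times> nat) \<Rightarrow> nat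
             \<Rightarrow> (nat \<Rightarrow> nat) \<times> (nat \<Rightarrow> nat list)" where
  "run act \<sigma> 0 = (\<lambda>_. 0, \<lambda>_. [])"
| "run act \<sigma> (Suc t) =
     (let (rs, hs) = run act \<sigma> t; (p, k) = \<sigma> t; h' = hs p @ [rs k]
      in (rs(k := act h'), hs(p := h')))"

(* history of the prisoner visiting at step t, including the state observed at step t *)
definition obs :: "(nat list \<Rightarrow> nat) \<Rightarrow> (nat \<Rightarrow> nat \<times> nat) \<Rightarrow> nat \<Rightarrow> nat list" where
  "obs act \<sigma> t = snd (run act \<sigma> t) (fst (\<sigma> t)) @ [fst (run act \<sigma> t) (snd (\<sigma> t))]"

definition uses_states :: "nat \<Rightarrow> (nat list \<Rightarrow> nat) \<Rightarrow> bool" where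
  "uses_states q act \<longleftrightarrow> (\<forall>h. act h < q)"

definition symmetric_winning ::
  "nat \<Rightarrow> nat \<Rightarrow> nat \<Rightarrow> (nat list \<Rightarrow> nat) \<Rightarrow> (nat list \<Rightarrow> bool) \<Rightarrow> bool" where
  "symmetric_winning n r q act decl \<longleftrightarrow> uses_states q act \<and>
     (\<forall>\<sigma>. valid_schedule n r \<sigma> \<longrightarrow>
        (\<exists>t. decl (obs act \<sigma> t)) \<and>
        (\<forall>t. decl (obs act \<sigma> t) \<longrightarrow>
             (\<forall>p<n. \<forall>k<r. \<exists>t'\<le>t. \<sigma> t' = (p, k))))"

definition leaders ::
  "nat \<Rightarrow> (nat list \<Rightarrow> nat) \<Rightarrow> (nat list \<Rightarrow> bool) \<Rightarrow> (nat \<Rightarrow> nat \<times> nat) \<Rightarrow> nat set" where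
  "leaders n act lead \<sigma> = {p. p < n \<and> (\<exists>t. fst (\<sigma> t) = p \<and> lead (obs act \<sigma> t))}"

definition symmetric_leader_election ::
  "nat \<Rightarrow> nat \<Rightarrow> nat \<Rightarrow> (nat list \<Rightarrow> nat) \<Rightarrow> (nat list \<Rightarrow> bool) \<Rightarrow> bool" where
  "symmetric_leader_election n r q act lead \<longleftrightarrow> uses_states q act \<and>
     (\<forall>\<sigma>. valid_schedule n r \<sigma> \<longrightarrow> card (leaders n act lead \<sigma>) = 1)"

end

theory Submission
  imports Defs
begin


datatype lst = El "nat list" | Uc | Ch nat | P0 nat | P1 nat | P2 nat nat | P3 nat nat | Dn

fun isEU :: "lst \<Rightarrow> bool" where
  "isEU (El _) = True" | "isEU Uc = True" | "isEU _ = False"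
fun isCh :: "lst \<Rightarrow> bool" where
  "isCh (Ch _) = True" | "isCh _ = False"
fun isEl :: "lst \<Rightarrow> bool" where
  "isEl (El _) = True" | "isEl _ = False"

lemma run_agree: "(\<And>j. j < m \<Longrightarrow> s1 j = s2 j) \<Longrightarrow> run a s1 m = run a s2 m"
  by (induction m) (auto simp: Let_def split: prod.splits)

locale pset =
  fixes q n r :: nat and act0 :: "nat list \<Rightarrow> nat" and lead0 :: "nat list \<Rightarrow> bool"
  assumes n1: "n \<ge> 1" and r1: "r \<ge> 1" and q1: "q \<ge> 1"
    and sle: "symmetric_leader_election n r q act0 lead0"
begin

lemma act0_lt: "act0 h < q"
  using sle unfolding symmetric_leader_election_def uses_states_def by auto

definition kp :: "nat \<Rightarrow> nat" where "kp s = (if s < q + 4 then s else q)"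

definition dL0 :: "nat \<Rightarrow> nat \<Rightarrow> lst \<times> nat" where
  "dL0 c s = (if s < q then ((if Suc c \<ge> r then (if n \<le> 1 then Dn else P1 0) else P0 (Suc c)), q)
              else (P0 c, kp s))"

definition dU :: "nat \<Rightarrow> lst \<times> nat" where
  "dU s = (if s = q + 1 then (Ch 1, q + 2) else (Uc, kp s))"

fun dl :: "lst \<Rightarrow> nat \<Rightarrow> lst \<times> nat" where
  "dl (El xs) s = (if s < q then (if lead0 (xs @ [s]) then dL0 0 s else (El (xs @ [s]), act0 (xs @ [s]))) else dU s)"
| "dl Uc s = dU s"
| "dl (Ch c) s = (if s = q \<and> c < r then (Ch (Suc c), q + 2) else (Ch c, kp s))"
| "dl (P0 c) s = dL0 c s"
| "dl (P1 i) s = (if s = q then (P2 0 i, q + 1) else (P1 i, kp s))"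
| "dl (P2 c i) s = (if s = q + 2 then (if Suc c \<ge> r then P3 0 i else P2 (Suc c) i, q + 3) else (P2 c i, kp s))"
| "dl (P3 c i) s = (if s = q + 3 then (if Suc c \<ge> r then (if Suc i \<ge> n - 1 then Dn else P1 (Suc i)) else P3 (Suc c) i, q) else (P3 c i, kp s))"
| "dl Dn s = (Dn, kp s)"

definition loc :: "nat list \<Rightarrow> lst" where
  "loc h = foldl (\<lambda>l s. fst (dl l s)) (El []) h"

definition actN :: "nat list \<Rightarrow> nat" where
  "actN h = (if h = [] then 0 else snd (dl (loc (butlast h)) (last h)))"

definition declN :: "nat list \<Rightarrow> bool" where
  "declN h = (loc h = Dn)"

lemma loc_snoc: "loc (h @ [s]) = fst (dl (loc h) s)"
  by (simp add: loc_def)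

lemma actN_snoc: "actN (h @ [s]) = snd (dl (loc h) s)"
  by (simp add: actN_def)

lemma act0_lt4: "act0 h < q + 4"
  using act0_lt[of h] by linarith

lemma dl_lt: "snd (dl l s) < q + 4"
  using act0_lt4 by (cases l) (auto simp: dL0_def dU_def kp_def less_imp_le_nat intro: less_trans)

lemma uses: "uses_states (q + 4) actN"
  unfolding uses_states_def actN_def using dl_lt by auto

lemma loc_El: "loc h = El xs \<Longrightarrow> xs = h"
proof (induction h arbitrary: xs rule: rev_induct)
  case Nil then show ?case by (simp add: loc_def)
next
  case (snoc s h)
  then show ?case
    by (cases "loc h") (auto simp: loc_snoc dL0_def dU_def split: if_splits)
qed

lemma notEl_stay: "\<not> isEl l \<Longrightarrow> \<not> isEl (fst (dl l s))"
  by (cases l) (auto simp: dL0_def dU_def)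

definition base :: "nat \<Rightarrow> nat" where "base i = r + 2 + min i n * (2 * r + 4)"

fun mu :: "lst \<Rightarrow> nat" where
  "mu (El _) = 0" | "mu Uc = 0" | "mu (Ch c) = Suc (min c r)" | "mu (P0 c) = Suc (min c r)"
| "mu (P1 i) = base i" | "mu (P2 c i) = base i + Suc (min c r)"
| "mu (P3 c i) = base i + r + 2 + min c r" | "mu Dn = r + 2 + Suc n * (2 * r + 4)"

definition K :: nat where "K = r + 2 + Suc n * (2 * r + 4)"

lemma minmul: "min i n * (2 * r + 4) \<le> n * (2 * r + 4)"
  by (rule mult_le_mono1) simp

lemma base_le: "base i \<le> base n"
  unfolding base_def using minmul[of i] by simp

lemma baseK: "base n + 2 * r + 4 = K"
  unfolding base_def K_def by simp

lemma mu_le: "mu l \<le> K"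
proof (cases l)
  case (P1 i) then show ?thesis using base_le[of i] baseK by simp
next
  case (P2 c i) then show ?thesis using base_le[of i] baseK by simp
next
  case (P3 c i) then show ?thesis using base_le[of i] baseK by simp
qed (auto simp: K_def)

lemma mu_mono: "mu l \<le> mu (fst (dl l s))"
proof (cases l)
  case (P3 c i)
  have "base i + r + 2 + min c r < r + 2 + Suc n * (2 * r + 4)"
    using base_le[of i] baseK min.cobounded2[of c r] unfolding K_def by linarith
  moreover have "Suc i < n - 1 \<Longrightarrow> base i + r + 2 + min c r < base (Suc i)"
    by (simp add: base_def)
  ultimately show ?thesis using P3 by (auto simp: not_le)
next
  case (P2 c i) then show ?thesis by (auto simp: base_def)
qed (auto simp: dL0_def dU_def base_def)


lemma kp_id: "s < q + 4 \<Longrightarrow> kp s = s"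
  by (simp add: kp_def)

lemma mu_dL0: "s < q \<Longrightarrow> mu (fst (dL0 c s)) > mu (P0 c)"
  by (auto simp: dL0_def base_def)

lemma mu_same:
  assumes m: "mu (fst (dl l s)) = mu l" and s4: "s < q + 4"
  shows "(snd (dl l s) = s \<or> (s < q \<and> snd (dl l s) < q)) \<and> (fst (dl l s) = l \<or> (isEU l \<and> isEU (fst (dl l s))))"
proof (cases l)
  case (El xs)
  show ?thesis
  proof (cases "s < q")
    case True
    show ?thesis
    proof (cases "lead0 (xs @ [s])")
      case True
      then have "mu (fst (dl l s)) > 0" using El \<open>s < q\<close> mu_dL0[of s 0] by simp
      then show ?thesis using m El by simp
    next
      case False
      then show ?thesis using El \<open>s < q\<close> act0_lt by simp
    qed
  next
    case False
    then show ?thesis using m El s4 by (cases "s = Suc q") (simp_all add: dU_def kp_def)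
  qed
next
  case Uc then show ?thesis using m s4 by (cases "s = Suc q") (simp_all add: dU_def kp_def)
next
  case (Ch c) then show ?thesis using m s4 by (cases "s = q \<and> c < r") (simp_all add: kp_def)
next
  case (P0 c)
  show ?thesis
  proof (cases "s < q")
    case True
    then show ?thesis using m P0 mu_dL0[of s c] by simp
  next
    case False
    then show ?thesis using P0 s4 by (simp add: dL0_def kp_def)
  qed
next
  case (P1 i)
  show ?thesis
  proof (cases "s = q")
    case True
    then show ?thesis using m P1 by (simp add: base_def)
  next
    case False
    then show ?thesis using P1 s4 by (simp add: kp_def)
  qed
next
  case (P2 c i)
  show ?thesis
  proof (cases "s = q + 2")
    case True
    have "mu (fst (dl l s)) > mu l" using True P2 min.cobounded2[of c r] by (auto simp: base_def)
    then show ?thesis using m by simp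
  next
    case False
    then show ?thesis using P2 s4 by (simp add: kp_def)
  qed
next
  case (P3 c i)
  show ?thesis
  proof (cases "s = q + 3")
    case True
    have a: "base i + r + 2 + min c r < r + 2 + Suc n * (2 * r + 4)"
      using base_le[of i] baseK min.cobounded2[of c r] unfolding K_def by linarith
    have b: "Suc i < n - 1 \<Longrightarrow> base i + r + 2 + min c r < base (Suc i)"
      by (simp add: base_def)
    have "mu (fst (dl l s)) > mu l" using True P3 a b by (auto simp: not_le)
    then show ?thesis using m by simp
  next
    case False
    then show ?thesis using P3 s4 by (simp add: kp_def)
  qed
next
  case Dn then show ?thesis using s4 by (simp add: kp_def)
qed

definition cnt :: "(nat \<Rightarrow> nat) \<Rightarrow> (nat \<Rightarrow> bool) \<Rightarrow> nat" where
  "cnt R P = card {k. k < r \<and> P (R k)}"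

lemma cnt_upd:
  assumes "k0 < r"
  shows "cnt (R(k0 := w)) P + (if P (R k0) then 1 else 0) = cnt R P + (if P w then 1 else 0)"
proof -
  let ?S = "{k. k < r \<and> P (R k)}" and ?S' = "{k. k < r \<and> P ((R(k0 := w)) k)}"
  have f: "finite ?S" "finite ?S'" by auto
  have e: "?S' - {k0} = ?S - {k0}" by auto
  have c1: "card ?S = card (?S - {k0}) + (if P (R k0) then 1 else 0)"
  proof (cases "P (R k0)")
    case True
    then have "k0 \<in> ?S" using assms by simp
    from card_Suc_Diff1[OF f(1) this] True show ?thesis by simp
  next
    case False
    then have "?S - {k0} = ?S" by auto
    then show ?thesis using False by simp
  qed
  have c2: "card ?S' = card (?S' - {k0}) + (if P w then 1 else 0)"
  proof (cases "P w")
    case True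
    then have "k0 \<in> ?S'" using assms by simp
    from card_Suc_Diff1[OF f(2) this] True show ?thesis by simp
  next
    case False
    then have "?S' - {k0} = ?S'" by auto
    then show ?thesis using False by simp
  qed
  show ?thesis unfolding cnt_def using c1 c2 e by simp
qed

lemma cnt_le: "cnt R P \<le> r"
proof -
  have "card {k. k < r \<and> P (R k)} \<le> card {..<r}" by (rule card_mono) auto
  then show ?thesis by (simp add: cnt_def)
qed

lemma cnt_all: "cnt R P \<ge> r \<Longrightarrow> k < r \<Longrightarrow> P (R k)"
proof -
  assume a: "cnt R P \<ge> r" "k < r"
  have "{k. k < r \<and> P (R k)} = {..<r}"
    apply (rule card_subset_eq) using a(1) cnt_le[of R P] by (auto simp: cnt_def)
  then show ?thesis using a(2) by auto
qed

lemma cnt_ex: "cnt R P < r \<Longrightarrow> \<exists>k<r. \<not> P (R k)"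
proof (rule ccontr)
  assume a: "cnt R P < r" "\<not> (\<exists>k<r. \<not> P (R k))"
  then have "{k. k < r \<and> P (R k)} = {..<r}" by auto
  then show False using a(1) by (simp add: cnt_def)
qed

lemma cnt_zero: "(\<And>k. k < r \<Longrightarrow> \<not> P (R k)) \<Longrightarrow> cnt R P = 0"
  by (auto simp: cnt_def)

lemma cnt_cong: "(\<And>k. k < r \<Longrightarrow> P (R k) = Q (R' k)) \<Longrightarrow> cnt R P = cnt R' Q"
  unfolding cnt_def by (rule arg_cong[where f = card]) auto

lemma cnt_one:
  assumes "cnt R P = 1" "k < r" "k' < r" "P (R k)" "P (R k')" shows "k = k'"
proof -
  obtain x where x: "{k. k < r \<and> P (R k)} = {x}"
    using assms(1) unfolding cnt_def by (rule card_1_singletonE)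
  have "k \<in> {k. k < r \<and> P (R k)}" "k' \<in> {k. k < r \<and> P (R k)}" using assms by auto
  then show ?thesis unfolding x by simp
qed

definition CHs :: "(nat \<Rightarrow> lst) \<Rightarrow> nat set" where
  "CHs LS = {p. p < n \<and> isCh (LS p)}"

lemma CHs_fin: "finite (CHs LS)" by (simp add: CHs_def)

definition full :: "(nat \<times> nat) set \<Rightarrow> nat \<Rightarrow> bool" where
  "full V p \<longleftrightarrow> (\<forall>k<r. (p, k) \<in> V)"

lemma full_mono: "full V p \<Longrightarrow> V \<subseteq> V' \<Longrightarrow> full V' p"
  by (auto simp: full_def)

definition InvA :: "nat \<Rightarrow> (nat \<Rightarrow> lst) \<Rightarrow> bool" where
  "InvA L LS \<longleftrightarrow> L < n \<and> \<not> isEU (LS L) \<and> \<not> isCh (LS L) \<and> (\<forall>p<n. p \<noteq> L \<longrightarrow> isEU (LS p) \<or> isCh (LS p))"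

definition ph0 where
  "ph0 L c R LS V \<longleftrightarrow> c < r \<and> cnt R (\<lambda>v. q \<le> v) = c \<and> (\<forall>k<r. q \<le> R k \<longrightarrow> R k = q \<and> (L, k) \<in> V) \<and> CHs LS = {}"

definition ph1 where
  "ph1 L i R LS V \<longleftrightarrow> Suc i < n \<and> (\<forall>k<r. R k = q) \<and> full V L \<and> card (CHs LS) = i
     \<and> (\<forall>p\<in>CHs LS. LS p = Ch r \<and> full V p)"

definition ph2 where
  "ph2 L c i R LS V \<longleftrightarrow> Suc i < n \<and> full V L \<and> c < r \<and> (\<forall>k<r. q \<le> R k \<and> R k \<le> q + 3)
     \<and> cnt R (\<lambda>v. v = q + 3) = c"

definition ph2a where
  "ph2a i R LS V \<longleftrightarrow> cnt R (\<lambda>v. v = q + 1) = 1 \<and> (\<forall>k<r. R k \<noteq> q + 2 \<and> R k \<noteq> q + 3)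
     \<and> card (CHs LS) = i \<and> (\<forall>p\<in>CHs LS. LS p = Ch r \<and> full V p)"

definition ph2b where
  "ph2b i R LS V \<longleftrightarrow> (\<exists>P cp. P \<in> CHs LS \<and> LS P = Ch cp \<and> cp \<le> r \<and> (\<forall>k<r. R k \<noteq> q + 1)
     \<and> cnt R (\<lambda>v. v = q + 2 \<or> v = q + 3) = cp \<and> (\<forall>k<r. (R k = q + 2 \<or> R k = q + 3) \<longrightarrow> (P, k) \<in> V)
     \<and> card (CHs LS - {P}) = i \<and> (\<forall>p\<in>CHs LS - {P}. LS p = Ch r \<and> full V p))"

definition ph3 where
  "ph3 L c i R LS V \<longleftrightarrow> Suc i < n \<and> full V L \<and> c < r \<and> (\<forall>k<r. R k = q \<or> R k = q + 3)
     \<and> cnt R (\<lambda>v. v = q) = c \<and> card (CHs LS) = Suc i \<and> (\<forall>p\<in>CHs LS. LS p = Ch r \<and> full V p)"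

definition phD where
  "phD L R LS V \<longleftrightarrow> full V L \<and> card (CHs LS) = n - 1 \<and> (\<forall>p\<in>CHs LS. LS p = Ch r \<and> full V p)
     \<and> (\<forall>k<r. R k \<noteq> q + 1)"

definition Inv :: "nat \<Rightarrow> (nat \<Rightarrow> nat) \<Rightarrow> (nat \<Rightarrow> lst) \<Rightarrow> (nat \<times> nat) set \<Rightarrow> bool" where
  "Inv L R LS V \<longleftrightarrow> InvA L LS \<and> (case LS L of
      P0 c \<Rightarrow> ph0 L c R LS V
    | P1 i \<Rightarrow> ph1 L i R LS V
    | P2 c i \<Rightarrow> ph2 L c i R LS V \<and> (ph2a i R LS V \<or> ph2b i R LS V)
    | P3 c i \<Rightarrow> ph3 L c i R LS V
    | Dn \<Rightarrow> phD L R LS V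
    | _ \<Rightarrow> False)"

end



context pset begin

lemma Inv_benign:
  assumes I: "Inv L R LS V"
    and r1: "\<And>k. q \<le> R k \<Longrightarrow> R' k = R k" and r2: "\<And>k. R k < q \<Longrightarrow> R' k < q"
    and l1: "LS' L = LS L"
    and l2: "\<And>p. p < n \<Longrightarrow> p \<noteq> L \<Longrightarrow> isEU (LS p) \<Longrightarrow> isEU (LS' p)"
    and l3: "\<And>p. p < n \<Longrightarrow> \<not> isEU (LS p) \<Longrightarrow> LS' p = LS p"
    and v: "V \<subseteq> V'"
  shows "Inv L R' LS' V'"
proof -
  have IA: "InvA L LS" using I by (simp add: Inv_def)
  have nEU_Ch: "\<And>l. isCh l \<Longrightarrow> \<not> isEU l" by (case_tac l) auto
  have ch: "CHs LS' = CHs LS"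
  proof
    show "CHs LS' \<subseteq> CHs LS"
    proof
      fix p assume "p \<in> CHs LS'"
      then have p: "p < n" "isCh (LS' p)" by (auto simp: CHs_def)
      show "p \<in> CHs LS"
      proof (cases "isEU (LS p)")
        case True
        then have "p \<noteq> L" using IA by (auto simp: InvA_def)
        then have "isEU (LS' p)" using l2 p True by blast
        then show ?thesis using p nEU_Ch by blast
      next
        case False
        then show ?thesis using l3 p by (simp add: CHs_def)
      qed
    qed
  next
    show "CHs LS \<subseteq> CHs LS'"
      using l3 nEU_Ch by (auto simp: CHs_def)
  qed
  have chv: "\<And>p. p \<in> CHs LS \<Longrightarrow> LS' p = LS p" using l3 nEU_Ch by (auto simp: CHs_def)
  have ge: "\<And>k. q \<le> R' k \<longleftrightarrow> q \<le> R k" using r1 r2 by (metis not_le)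
  have eqv: "\<And>k v. q \<le> v \<Longrightarrow> (R' k = v) = (R k = v)" using r1 r2 by (metis not_le)
  have c1: "cnt R' (\<lambda>v. q \<le> v) = cnt R (\<lambda>v. q \<le> v)" by (rule cnt_cong) (simp add: ge)
  have c2: "\<And>j. cnt R' (\<lambda>v. v = q + j) = cnt R (\<lambda>v. v = q + j)" by (rule cnt_cong) (simp add: eqv)
  have c2': "cnt R' (\<lambda>v. v = q) = cnt R (\<lambda>v. v = q)" by (rule cnt_cong) (simp add: eqv)
  have c3: "cnt R' (\<lambda>v. v = q + 2 \<or> v = q + 3) = cnt R (\<lambda>v. v = q + 2 \<or> v = q + 3)"
    by (rule cnt_cong) (simp add: eqv)
  have IA': "InvA L LS'"
    using IA l1 l2 l3 unfolding InvA_def by (metis nEU_Ch)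
  have rng: "\<And>k. (q \<le> R' k \<and> R' k \<le> q + 3) = (q \<le> R k \<and> R k \<le> q + 3)" using ge eqv r1 by metis
  have rq: "\<And>k. (R' k = q) = (R k = q)" using eqv by simp
  have rq1: "\<And>k j. (R' k = q + j) = (R k = q + j)" using eqv by simp
  have fv: "\<And>p. full V p \<Longrightarrow> full V' p" using v full_mono by blast
  show ?thesis
  proof (cases "LS L")
    case (P0 c)
    then show ?thesis using I IA' l1 c1 ch r1 ge v unfolding Inv_def ph0_def by auto
  next
    case (P1 i)
    then show ?thesis using I IA' l1 ch chv rq fv unfolding Inv_def ph1_def by auto
  next
    case (P2 c i)
    have A: "ph2 L c i R' LS' V'" using I P2 fv rng c2[of 3] unfolding Inv_def ph2_def by auto
    have B: "ph2a i R' LS' V'" if "ph2a i R LS V"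
      using that c2[of 1] rq1[of _ 2] rq1[of _ 3] ch chv fv unfolding ph2a_def by auto
    have C: "ph2b i R' LS' V'" if hb: "ph2b i R LS V"
    proof -
      obtain P cp where "P \<in> CHs LS \<and> LS P = Ch cp \<and> cp \<le> r \<and> (\<forall>k<r. R k \<noteq> q + 1)
     \<and> cnt R (\<lambda>v. v = q + 2 \<or> v = q + 3) = cp \<and> (\<forall>k<r. (R k = q + 2 \<or> R k = q + 3) \<longrightarrow> (P, k) \<in> V)
     \<and> card (CHs LS - {P}) = i \<and> (\<forall>p\<in>CHs LS - {P}. LS p = Ch r \<and> full V p)"
        using hb unfolding ph2b_def by blast
      then show ?thesis unfolding ph2b_def using c3 rq1[of _ 1] rq1[of _ 2] rq1[of _ 3] ch chv fv v
        by (intro exI[of _ P] exI[of _ cp]) auto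
    qed
    show ?thesis using I P2 IA' l1 A B C unfolding Inv_def by auto
  next
    case (P3 c i)
    then show ?thesis using I IA' l1 ch chv rq rq1[of _ 3] fv c2' unfolding Inv_def ph3_def by auto
  next
    case Dn
    then show ?thesis using I IA' l1 ch chv rq1[of _ 1] fv unfolding Inv_def phD_def by auto
  qed (use I in \<open>auto simp: Inv_def\<close>)
qed


lemma CHs_upd: "CHs (LS(p := l)) = (if p < n \<and> isCh l then insert p (CHs LS) else CHs LS - {p})"
  by (auto simp: CHs_def)

lemma InvA_upd_L: "InvA L LS \<Longrightarrow> \<not> isEU l \<Longrightarrow> \<not> isCh l \<Longrightarrow> InvA L (LS(L := l))"
  by (auto simp: InvA_def)

lemma InvA_upd_p: "InvA L LS \<Longrightarrow> p \<noteq> L \<Longrightarrow> isEU l \<or> isCh l \<Longrightarrow> InvA L (LS(p := l))"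
  by (auto simp: InvA_def)

lemma L_notCh: "InvA L LS \<Longrightarrow> L \<notin> CHs LS"
  by (auto simp: InvA_def CHs_def)

lemma step_L0:
  assumes I: "Inv L R LS V" and L: "LS L = P0 c" and k: "k < r" and s: "R k < q"
  shows "Inv L (R(k := q)) (LS(L := fst (dL0 c (R k)))) (insert (L, k) V)"
proof -
  let ?R = "R(k := q)" and ?V = "insert (L, k) V"
  define l where "l = fst (dL0 c (R k))"
  have l: "l = (if Suc c \<ge> r then (if n \<le> 1 then Dn else P1 0) else P0 (Suc c))"
    using s by (simp add: l_def dL0_def)
  let ?LS = "LS(L := l)"
  have IA: "InvA L LS" and P: "ph0 L c R LS V" using I L by (auto simp: Inv_def)
  have IA': "InvA L ?LS" using IA l by (intro InvA_upd_L) auto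
  have ch: "CHs ?LS = {}" using P l by (auto simp: CHs_upd ph0_def)
  have cn: "cnt ?R (\<lambda>v. q \<le> v) = Suc c"
    using cnt_upd[OF k, of R q "\<lambda>v. q \<le> v"] P s by (simp add: ph0_def)
  show ?thesis
  proof (cases "Suc c \<ge> r")
    case False
    have "ph0 L (Suc c) ?R ?LS ?V" using False cn ch P unfolding ph0_def by auto
    then show ?thesis using IA' False l unfolding Inv_def l_def by simp
  next
    case True
    have cr: "c < r" using P by (simp add: ph0_def)
    have allq: "\<forall>k'<r. ?R k' = q"
    proof (intro allI impI)
      fix k' assume k': "k' < r"
      have "q \<le> ?R k'" using cnt_all[of ?R "\<lambda>v. q \<le> v" k'] cn True cr k' by simp
      then show "?R k' = q" using P k' by (auto simp: ph0_def split: if_splits)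
    qed
    have fl: "full ?V L"
    proof (unfold full_def, intro allI impI)
      fix k' assume k': "k' < r"
      show "(L, k') \<in> ?V"
      proof (cases "k' = k")
        case False
        then have "q \<le> R k'" using allq k' by (metis fun_upd_other order_refl)
        then show ?thesis using P k' by (simp add: ph0_def)
      qed simp
    qed
    show ?thesis
    proof (cases "n \<le> 1")
      case True
      then have "phD L ?R ?LS ?V" using fl ch allq n1 by (auto simp: phD_def)
      then show ?thesis using IA' l True \<open>Suc c \<ge> r\<close> unfolding Inv_def l_def by simp
    next
      case False
      then have "ph1 L 0 ?R ?LS ?V" using fl ch allq by (auto simp: ph1_def)
      then show ?thesis using IA' l False \<open>Suc c \<ge> r\<close> unfolding Inv_def l_def by simp
    qed
  qed
qed

lemma step_L1:
  assumes I: "Inv L R LS V" and L: "LS L = P1 i" and k: "k < r" and s: "R k = q"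
  shows "Inv L (R(k := q + 1)) (LS(L := P2 0 i)) (insert (L, k) V)"
proof -
  let ?R = "R(k := q + 1)" and ?V = "insert (L, k) V" and ?LS = "LS(L := P2 0 i)"
  have IA: "InvA L LS" and P: "ph1 L i R LS V" using I L by (auto simp: Inv_def)
  have IA': "InvA L ?LS" using IA by (intro InvA_upd_L) auto
  have ch: "CHs ?LS = CHs LS" using IA by (auto simp: CHs_upd L_notCh)
  have c0: "cnt R (\<lambda>v. v = q + 1) = 0" using P by (intro cnt_zero) (auto simp: ph1_def)
  have c1: "cnt ?R (\<lambda>v. v = q + 1) = 1"
    using cnt_upd[OF k, of R "q+1" "\<lambda>v. v = q + 1"] c0 s by simp
  have c3: "cnt ?R (\<lambda>v. v = q + 3) = 0" using P by (intro cnt_zero) (auto simp: ph1_def)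
  have fv: "\<And>p. full V p \<Longrightarrow> full ?V p" by (erule full_mono) auto
  have chv: "\<And>p. p \<in> CHs LS \<Longrightarrow> ?LS p = LS p" using IA L_notCh by fastforce
  have A: "ph2 L 0 i ?R ?LS ?V" using P c3 fv r1 unfolding ph2_def ph1_def by auto
  have B: "ph2a i ?R ?LS ?V" using P c1 ch chv fv unfolding ph2a_def ph1_def by auto
  show ?thesis using IA' A B unfolding Inv_def by simp
qed

lemma step_L2:
  assumes I: "Inv L R LS V" and L: "LS L = P2 c i" and k: "k < r" and s: "R k = q + 2"
  shows "Inv L (R(k := q + 3)) (LS(L := (if Suc c \<ge> r then P3 0 i else P2 (Suc c) i))) (insert (L, k) V)"
proof -
  define l where "l = (if Suc c \<ge> r then P3 0 i else P2 (Suc c) i)"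
  let ?R = "R(k := q + 3)" and ?V = "insert (L, k) V" and ?LS = "LS(L := l)"
  have IA: "InvA L LS" and P: "ph2 L c i R LS V" and P': "ph2a i R LS V \<or> ph2b i R LS V"
    using I L by (auto simp: Inv_def)
  have nb: "\<not> ph2a i R LS V" using s k by (auto simp: ph2a_def)
  then have Pb: "ph2b i R LS V" using P' by simp
  then obtain P cp where PP: "P \<in> CHs LS" "LS P = Ch cp" "cp \<le> r" "\<forall>k<r. R k \<noteq> q + 1"
     "cnt R (\<lambda>v. v = q + 2 \<or> v = q + 3) = cp" "\<forall>k<r. (R k = q + 2 \<or> R k = q + 3) \<longrightarrow> (P, k) \<in> V"
     "card (CHs LS - {P}) = i" "\<forall>p\<in>CHs LS - {P}. LS p = Ch r \<and> full V p"
    unfolding ph2b_def by blast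
  have IA': "InvA L ?LS" using IA by (intro InvA_upd_L) (auto simp: l_def)
  have ch: "CHs ?LS = CHs LS" using IA by (auto simp: CHs_upd L_notCh l_def)
  have PL: "P \<noteq> L" using PP(1) IA L_notCh by blast
  have chv: "\<And>p. p \<in> CHs LS \<Longrightarrow> ?LS p = LS p" using IA L_notCh by fastforce
  have fv: "\<And>p. full V p \<Longrightarrow> full ?V p" by (erule full_mono) auto
  have c3: "cnt ?R (\<lambda>v. v = q + 3) = Suc c"
    using cnt_upd[OF k, of R "q+3" "\<lambda>v. v = q + 3"] P s by (simp add: ph2_def)
  have cMC: "cnt ?R (\<lambda>v. v = q + 2 \<or> v = q + 3) = cp"
    using cnt_upd[OF k, of R "q+3" "\<lambda>v. v = q + 2 \<or> v = q + 3"] PP(5) s by simp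
  have rng: "\<forall>k'<r. q \<le> ?R k' \<and> ?R k' \<le> q + 3" using P by (auto simp: ph2_def)
  show ?thesis
  proof (cases "Suc c \<ge> r")
    case False
    have A: "ph2 L (Suc c) i ?R ?LS ?V" using P False c3 fv rng unfolding ph2_def by auto
    have B: "ph2b i ?R ?LS ?V"
      unfolding ph2b_def
      apply (rule exI[of _ P], rule exI[of _ cp])
      using PP ch chv PL cMC fv s by auto
    show ?thesis using IA' A B False unfolding Inv_def l_def by simp
  next
    case True
    have cr: "c < r" using P by (simp add: ph2_def)
    have allC: "\<forall>k'<r. ?R k' = q + 3"
      using cnt_all[of ?R "\<lambda>v. v = q + 3"] c3 True cr by auto
    have cpr: "cp = r"
    proof -
      have "cnt ?R (\<lambda>v. v = q + 2 \<or> v = q + 3) = cnt ?R (\<lambda>v. v = q + 3)"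
        by (rule cnt_cong) (use allC in auto)
      then show ?thesis using cMC c3 True cr by simp
    qed
    have fP: "full ?V P"
    proof (unfold full_def, intro allI impI)
      fix k' assume k': "k' < r"
      have "R k' = q + 2 \<or> R k' = q + 3"
        using allC k' s by (cases "k' = k") auto
      then show "(P, k') \<in> ?V" using PP(6) k' by auto
    qed
    have chP: "CHs LS = insert P (CHs LS - {P})" using PP(1) by auto
    have cardch: "card (CHs LS) = Suc i"
      using PP(1) PP(7) CHs_fin by (metis card_Suc_Diff1)
    have A: "ph3 L 0 i ?R ?LS ?V"
      unfolding ph3_def
    proof (intro conjI)
      show "Suc i < n" using P by (simp add: ph2_def)
      show "full ?V L" using P fv by (simp add: ph2_def)
      show "0 < r" using r1 by simp
      show "\<forall>k<r. ?R k = q \<or> ?R k = q + 3" using allC by simp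
      show "cnt ?R (\<lambda>v. v = q) = 0" by (rule cnt_zero) (use allC in auto)
      show "card (CHs ?LS) = Suc i" using ch cardch by simp
      show "\<forall>p\<in>CHs ?LS. ?LS p = Ch r \<and> full ?V p"
      proof
        fix p assume "p \<in> CHs ?LS"
        then have p: "p \<in> CHs LS" using ch by simp
        show "?LS p = Ch r \<and> full ?V p"
        proof (cases "p = P")
          case True then show ?thesis using chv p PP(2) cpr fP by simp
        next
          case False then show ?thesis using chv p PP(8) fv by simp
        qed
      qed
    qed
    show ?thesis using IA' A True unfolding Inv_def l_def by simp
  qed
qed


lemma step_L3:
  assumes I: "Inv L R LS V" and L: "LS L = P3 c i" and k: "k < r" and s: "R k = q + 3"
  shows "Inv L (R(k := q)) (LS(L := (if Suc c \<ge> r then (if Suc i \<ge> n - 1 then Dn else P1 (Suc i)) else P3 (Suc c) i))) (insert (L, k) V)"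
proof -
  define l where "l = (if Suc c \<ge> r then (if Suc i \<ge> n - 1 then Dn else P1 (Suc i)) else P3 (Suc c) i)"
  let ?R = "R(k := q)" and ?V = "insert (L, k) V" and ?LS = "LS(L := l)"
  have IA: "InvA L LS" and P: "ph3 L c i R LS V" using I L by (auto simp: Inv_def)
  have IA': "InvA L ?LS" using IA by (intro InvA_upd_L) (auto simp: l_def)
  have ch: "CHs ?LS = CHs LS" using IA by (auto simp: CHs_upd L_notCh l_def)
  have chv: "\<And>p. p \<in> CHs LS \<Longrightarrow> ?LS p = LS p" using IA L_notCh by fastforce
  have fv: "\<And>p. full V p \<Longrightarrow> full ?V p" by (erule full_mono) auto
  have cB: "cnt ?R (\<lambda>v. v = q) = Suc c"
    using cnt_upd[OF k, of R "q" "\<lambda>v. v = q"] P s by (simp add: ph3_def)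
  have cr: "c < r" and si: "Suc i < n" using P by (auto simp: ph3_def)
  show ?thesis
  proof (cases "Suc c \<ge> r")
    case False
    have "ph3 L (Suc c) i ?R ?LS ?V" using P False cB ch chv fv unfolding ph3_def by auto
    then show ?thesis using IA' False unfolding Inv_def l_def by simp
  next
    case True
    have allq: "\<forall>k'<r. ?R k' = q"
      using cnt_all[of ?R "\<lambda>v. v = q"] cB True cr by auto
    show ?thesis
    proof (cases "Suc i \<ge> n - 1")
      case True
      have "phD L ?R ?LS ?V" unfolding phD_def using P ch chv fv allq True si unfolding ph3_def by auto
      then show ?thesis using IA' True \<open>Suc c \<ge> r\<close> unfolding Inv_def l_def by simp
    next
      case False
      have "ph1 L (Suc i) ?R ?LS ?V" unfolding ph1_def using P ch chv fv allq False unfolding ph3_def by auto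
      then show ?thesis using IA' False \<open>Suc c \<ge> r\<close> unfolding Inv_def l_def by simp
    qed
  qed
qed

lemma step_T:
  assumes I: "Inv L R LS V" and p: "p < n" "p \<noteq> L" and EU: "isEU (LS p)" and k: "k < r" and s: "R k = q + 1"
  shows "Inv L (R(k := q + 2)) (LS(p := Ch 1)) (insert (p, k) V)"
proof -
  let ?R = "R(k := q + 2)" and ?V = "insert (p, k) V" and ?LS = "LS(p := Ch 1)"
  have IA: "InvA L LS" using I by (simp add: Inv_def)
  obtain c i where L: "LS L = P2 c i" and P: "ph2 L c i R LS V" and Pa: "ph2a i R LS V"
  proof (cases "LS L")
    case (P0 c) then show ?thesis using I k s by (auto simp: Inv_def ph0_def)
  next
    case (P1 i) then show ?thesis using I k s by (auto simp: Inv_def ph1_def)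
  next
    case (P3 c i) then show ?thesis using I k s by (auto simp: Inv_def ph3_def)
  next
    case Dn then show ?thesis using I k s by (auto simp: Inv_def phD_def)
  next
    case (P2 c i)
    then have "ph2 L c i R LS V" "ph2a i R LS V \<or> ph2b i R LS V" using I by (auto simp: Inv_def)
    moreover have "\<not> ph2b i R LS V" using k s by (auto simp: ph2b_def)
    ultimately show ?thesis using that P2 by blast
  qed (use I in \<open>auto simp: Inv_def\<close>)
  have nEU_Ch: "\<And>l. isCh l \<Longrightarrow> \<not> isEU l" by (case_tac l) auto
  have pn: "p \<notin> CHs LS" using EU nEU_Ch by (auto simp: CHs_def)
  have IA': "InvA L ?LS" using IA p by (intro InvA_upd_p) auto
  have ch: "CHs ?LS = insert p (CHs LS)" using p by (simp add: CHs_upd)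
  have chv: "\<And>p'. p' \<in> CHs LS \<Longrightarrow> ?LS p' = LS p'" using pn by auto
  have fv: "\<And>p. full V p \<Longrightarrow> full ?V p" by (erule full_mono) auto
  have c3: "cnt ?R (\<lambda>v. v = q + 3) = c"
    using cnt_upd[OF k, of R "q+2" "\<lambda>v. v = q + 3"] P s by (simp add: ph2_def)
  have noMC: "\<forall>k<r. R k \<noteq> q + 2 \<and> R k \<noteq> q + 3" using Pa by (simp add: ph2a_def)
  have cMC0: "cnt R (\<lambda>v. v = q + 2 \<or> v = q + 3) = 0" by (rule cnt_zero) (use noMC in auto)
  have cMC: "cnt ?R (\<lambda>v. v = q + 2 \<or> v = q + 3) = 1"
    using cnt_upd[OF k, of R "q+2" "\<lambda>v. v = q + 2 \<or> v = q + 3"] cMC0 s by simp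
  have uT: "\<forall>k'<r. ?R k' \<noteq> q + 1"
  proof (intro allI impI)
    fix k' assume k': "k' < r"
    show "?R k' \<noteq> q + 1"
    proof (cases "k' = k")
      case False
      have "R k' \<noteq> q + 1"
      proof
        assume "R k' = q + 1"
        then have "k' = k" using cnt_one[of R "\<lambda>v. v = q + 1" k' k] Pa k k' s by (simp add: ph2a_def)
        then show False using False by simp
      qed
      then show ?thesis using False by simp
    qed simp
  qed
  have A: "ph2 L c i ?R ?LS ?V" using P c3 fv unfolding ph2_def by auto
  have B: "ph2b i ?R ?LS ?V"
    unfolding ph2b_def
  proof (rule exI[of _ p], rule exI[of _ 1], intro conjI)
    show "p \<in> CHs ?LS" using ch by simp
    show "?LS p = Ch 1" by simp
    show "1 \<le> r" using r1 by simp
    show "\<forall>k<r. ?R k \<noteq> q + 1" using uT by simp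
    show "cnt ?R (\<lambda>v. v = q + 2 \<or> v = q + 3) = 1" using cMC .
    show "\<forall>k'<r. (?R k' = q + 2 \<or> ?R k' = q + 3) \<longrightarrow> (p, k') \<in> ?V" using noMC by auto
    show "card (CHs ?LS - {p}) = i" using ch pn Pa by (simp add: ph2a_def)
    show "\<forall>p'\<in>CHs ?LS - {p}. ?LS p' = Ch r \<and> full ?V p'" using ch Pa fv by (auto simp: ph2a_def)
  qed
  show ?thesis using IA' A B L p unfolding Inv_def by simp
qed

lemma step_C:
  assumes I: "Inv L R LS V" and p: "p < n" "p \<noteq> L" and C: "LS p = Ch c" "c < r" and k: "k < r" and s: "R k = q"
  shows "Inv L (R(k := q + 2)) (LS(p := Ch (Suc c))) (insert (p, k) V)"
proof -
  let ?R = "R(k := q + 2)" and ?V = "insert (p, k) V" and ?LS = "LS(p := Ch (Suc c))"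
  have IA: "InvA L LS" using I by (simp add: Inv_def)
  have pC: "p \<in> CHs LS" using p C by (simp add: CHs_def)
  obtain c' i where L: "LS L = P2 c' i" and P: "ph2 L c' i R LS V" and Pb: "ph2b i R LS V"
  proof (cases "LS L")
    case (P0 c) then show ?thesis using I pC by (auto simp: Inv_def ph0_def)
  next
    case (P1 i) then show ?thesis using I pC C by (auto simp: Inv_def ph1_def)
  next
    case (P3 c i) then show ?thesis using I pC C by (auto simp: Inv_def ph3_def)
  next
    case Dn then show ?thesis using I pC C by (auto simp: Inv_def phD_def)
  next
    case (P2 c i)
    then have "ph2 L c i R LS V" "ph2a i R LS V \<or> ph2b i R LS V" using I by (auto simp: Inv_def)
    moreover have "\<not> ph2a i R LS V" using pC C by (auto simp: ph2a_def)
    ultimately show ?thesis using that P2 by blast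
  qed (use I in \<open>auto simp: Inv_def\<close>)
  obtain P cp where PP: "P \<in> CHs LS" "LS P = Ch cp" "cp \<le> r" "\<forall>k<r. R k \<noteq> q + 1"
     "cnt R (\<lambda>v. v = q + 2 \<or> v = q + 3) = cp" "\<forall>k<r. (R k = q + 2 \<or> R k = q + 3) \<longrightarrow> (P, k) \<in> V"
     "card (CHs LS - {P}) = i" "\<forall>p\<in>CHs LS - {P}. LS p = Ch r \<and> full V p"
    using Pb unfolding ph2b_def by blast
  have pP: "p = P"
  proof (rule ccontr)
    assume "p \<noteq> P"
    then have "p \<in> CHs LS - {P}" using pC by simp
    then have "LS p = Ch r" using PP(8) by blast
    then show False using C by simp
  qed
  have cp: "cp = c" using PP(2) C pP by simp
  have IA': "InvA L ?LS" using IA p by (intro InvA_upd_p) auto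
  have ch: "CHs ?LS = CHs LS" using p pC by (auto simp: CHs_upd)
  have chv: "\<And>p'. p' \<noteq> p \<Longrightarrow> ?LS p' = LS p'" by simp
  have fv: "\<And>p. full V p \<Longrightarrow> full ?V p" by (erule full_mono) auto
  have c3: "cnt ?R (\<lambda>v. v = q + 3) = c'"
    using cnt_upd[OF k, of R "q+2" "\<lambda>v. v = q + 3"] P s by (simp add: ph2_def)
  have cMC: "cnt ?R (\<lambda>v. v = q + 2 \<or> v = q + 3) = Suc c"
    using cnt_upd[OF k, of R "q+2" "\<lambda>v. v = q + 2 \<or> v = q + 3"] PP(5) cp s by simp
  have A: "ph2 L c' i ?R ?LS ?V" using P c3 fv unfolding ph2_def by auto
  have B: "ph2b i ?R ?LS ?V"
    unfolding ph2b_def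
  proof (rule exI[of _ p], rule exI[of _ "Suc c"], intro conjI)
    show "p \<in> CHs ?LS" using ch pC by simp
    show "?LS p = Ch (Suc c)" by simp
    show "Suc c \<le> r" using C by simp
    show "\<forall>k<r. ?R k \<noteq> q + 1" using PP(4) by simp
    show "cnt ?R (\<lambda>v. v = q + 2 \<or> v = q + 3) = Suc c" using cMC .
    show "\<forall>k'<r. (?R k' = q + 2 \<or> ?R k' = q + 3) \<longrightarrow> (p, k') \<in> ?V" using PP(6) pP by auto
    show "card (CHs ?LS - {p}) = i" using ch PP(7) pP by simp
    show "\<forall>p'\<in>CHs ?LS - {p}. ?LS p' = Ch r \<and> full ?V p'" using ch PP(8) pP fv by auto
  qed
  show ?thesis using IA' A B L p unfolding Inv_def by simp
qed


lemma Inv_step: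
  assumes I: "Inv L R LS V" and p: "p < n" and k: "k < r" and b: "R k < q + 4"
    and nl: "\<And>xs. p \<noteq> L \<Longrightarrow> LS p = El xs \<Longrightarrow> R k < q \<Longrightarrow> \<not> lead0 (xs @ [R k])"
  shows "Inv L (R(k := snd (dl (LS p) (R k)))) (LS(p := fst (dl (LS p) (R k)))) (insert (p, k) V)"
proof -
  have IA: "InvA L LS" using I by (simp add: Inv_def)
  define s where "s = R k"
  show ?thesis
  proof (cases "mu (fst (dl (LS p) s)) = mu (LS p)")
    case True
    have ms: "(snd (dl (LS p) s) = s \<or> (s < q \<and> snd (dl (LS p) s) < q)) \<and> (fst (dl (LS p) s) = LS p \<or> (isEU (LS p) \<and> isEU (fst (dl (LS p) s))))"
      using mu_same[OF True] b s_def by simp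
    have nL: "\<not> isEU (LS L)" using IA by (simp add: InvA_def)
    show ?thesis unfolding s_def[symmetric]
    proof (rule Inv_benign[OF I])
      show "\<And>k'. q \<le> R k' \<Longrightarrow> (R(k := snd (dl (LS p) s))) k' = R k'" using ms s_def by auto
      show "\<And>k'. R k' < q \<Longrightarrow> (R(k := snd (dl (LS p) s))) k' < q" using ms s_def by auto
      show "(LS(p := fst (dl (LS p) s))) L = LS L" using ms nL by auto
      show "\<And>p'. p' < n \<Longrightarrow> p' \<noteq> L \<Longrightarrow> isEU (LS p') \<Longrightarrow> isEU ((LS(p := fst (dl (LS p) s))) p')"
        using ms by auto
      show "\<And>p'. p' < n \<Longrightarrow> \<not> isEU (LS p') \<Longrightarrow> (LS(p := fst (dl (LS p) s))) p' = LS p'"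
        using ms by auto
      show "V \<subseteq> insert (p, k) V" by auto
    qed
  next
    case False
    show ?thesis
    proof (cases "p = L")
      case True
      show ?thesis
      proof (cases "LS L")
        case (P0 c)
        have "s < q" using False True P0 by (auto simp: dL0_def kp_def split: if_splits)
        then show ?thesis using step_L0[OF I P0 k] True P0 s_def by (simp add: dL0_def)
      next
        case (P1 i)
        have "s = q" using False True P1 by (auto split: if_splits)
        then show ?thesis using step_L1[OF I P1 k] True P1 s_def by simp
      next
        case (P2 c i)
        have "s = q + 2" using False True P2 by (auto split: if_splits)
        then show ?thesis using step_L2[OF I P2 k] True P2 s_def by simp
      next
        case (P3 c i)
        have "s = q + 3" using False True P3 by (auto split: if_splits)
        then show ?thesis using step_L3[OF I P3 k] True P3 s_def by simp
      next
        case Dn then show ?thesis using False True by simp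
      qed (use IA True in \<open>auto simp: InvA_def\<close>)
    next
      case pL: False
      have EC: "isEU (LS p) \<or> isCh (LS p)" using IA p pL by (simp add: InvA_def)
      show ?thesis
      proof (cases "LS p")
        case (El xs)
        show ?thesis
        proof (cases "s < q")
          case True
          then have "\<not> lead0 (xs @ [s])" using nl[OF pL El] s_def by simp
          then show ?thesis using False El True by simp
        next
          case sq: False
          have "s = q + 1" using False El sq by (auto simp: dU_def split: if_splits)
          then show ?thesis using step_T[OF I p pL _ k] El s_def by (simp add: dU_def)
        qed
      next
        case Uc
        have "s = q + 1" using False Uc by (auto simp: dU_def split: if_splits)
        then show ?thesis using step_T[OF I p pL _ k] Uc s_def by (simp add: dU_def)
      next
        case (Ch c)
        have "s = q \<and> c < r" using False Ch by (auto split: if_splits)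
        then show ?thesis using step_C[OF I p pL Ch _ k] s_def Ch by simp
      qed (use EC in auto)
    qed
  qed
qed

end



locale prun = pset +
  fixes \<sigma> :: "nat \<Rightarrow> nat \<times> nat"
  assumes val: "valid_schedule n r \<sigma>"
begin

definition Rm :: "nat \<Rightarrow> nat \<Rightarrow> nat" where "Rm t = fst (run actN \<sigma> t)"
definition Hm :: "nat \<Rightarrow> nat \<Rightarrow> nat list" where "Hm t = snd (run actN \<sigma> t)"
definition LS :: "nat \<Rightarrow> nat \<Rightarrow> lst" where "LS t p = loc (Hm t p)"
abbreviation pv :: "nat \<Rightarrow> nat" where "pv t \<equiv> fst (\<sigma> t)"
abbreviation kv :: "nat \<Rightarrow> nat" where "kv t \<equiv> snd (\<sigma> t)"

lemma vb: "pv t < n" "kv t < r"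
  using val by (auto simp: valid_schedule_def)

lemma vinf: "p < n \<Longrightarrow> k < r \<Longrightarrow> \<exists>t\<ge>N. \<sigma> t = (p, k)"
  using val by (auto simp: valid_schedule_def)

lemma run_Suc_gen: "run a \<sigma>' (Suc t) = ((fst (run a \<sigma>' t))(snd (\<sigma>' t) := a (snd (run a \<sigma>' t) (fst (\<sigma>' t)) @ [fst (run a \<sigma>' t) (snd (\<sigma>' t))])),
   (snd (run a \<sigma>' t))(fst (\<sigma>' t) := snd (run a \<sigma>' t) (fst (\<sigma>' t)) @ [fst (run a \<sigma>' t) (snd (\<sigma>' t))]))"
  by (simp add: Let_def split: prod.splits)

lemma Rm_Suc: "Rm (Suc t) = (Rm t)(kv t := snd (dl (LS t (pv t)) (Rm t (kv t))))"
  unfolding Rm_def LS_def Hm_def run_Suc_gen by (simp add: actN_snoc del: run.simps)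

lemma Hm_Suc: "Hm (Suc t) = (Hm t)(pv t := Hm t (pv t) @ [Rm t (kv t)])"
  unfolding Rm_def Hm_def run_Suc_gen by (simp del: run.simps)

lemma LS_Suc: "LS (Suc t) = (LS t)(pv t := fst (dl (LS t (pv t)) (Rm t (kv t))))"
  by (rule ext) (simp add: LS_def Hm_Suc loc_snoc)

lemma LS_0: "LS 0 p = El []" by (simp add: LS_def Hm_def loc_def)
lemma Rm_0: "Rm 0 k = 0" by (simp add: Rm_def)

lemma obs_eq: "obs actN \<sigma> t = Hm t (pv t) @ [Rm t (kv t)]"
  by (simp add: obs_def Rm_def Hm_def)

lemma loc_obs: "loc (obs actN \<sigma> t) = LS (Suc t) (pv t)"
  by (simp add: obs_eq LS_Suc loc_snoc LS_def)

lemma Rm_lt: "Rm t k < q + 4"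
  by (induction t) (auto simp: Rm_0 Rm_Suc dl_lt)

lemma run0_lt: "fst (run act0 \<sigma>' t) k < q"
  proof -
  have "0 < q" using q1 by simp
  then show ?thesis by (induction t) (simp_all add: run_Suc_gen act0_lt del: run.simps(2))
qed

definition LE :: "nat \<Rightarrow> bool" where
  "LE t \<longleftrightarrow> (\<exists>xs. LS t (pv t) = El xs \<and> Rm t (kv t) < q \<and> lead0 (xs @ [Rm t (kv t)]))"

lemma pre: "(\<And>t'. t' < T \<Longrightarrow> \<not> LE t') \<Longrightarrow> (\<forall>p. LS T p = El (snd (run act0 \<sigma> T) p)) \<and> Rm T = fst (run act0 \<sigma> T)"
proof (induction T)
  case 0 then show ?case by (simp add: LS_0 Rm_0 fun_eq_iff Rm_def)
next
  case (Suc T)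
  then have IH: "\<forall>p. LS T p = El (snd (run act0 \<sigma> T) p)" "Rm T = fst (run act0 \<sigma> T)" by auto
  have nl: "\<not> LE T" using Suc.prems by simp
  let ?p = "pv T" and ?k = "kv T"
  have s: "Rm T ?k < q" using IH(2) run0_lt by simp
  have nlead: "\<not> lead0 (snd (run act0 \<sigma> T) ?p @ [Rm T ?k])" using nl IH s by (simp add: LE_def)
  have d: "dl (LS T ?p) (Rm T ?k) = (El (snd (run act0 \<sigma> T) ?p @ [Rm T ?k]), act0 (snd (run act0 \<sigma> T) ?p @ [Rm T ?k]))"
    using IH(1) s nlead by simp
  show ?case
    using d IH by (simp add: LS_Suc Rm_Suc run_Suc_gen del: run.simps)
qed

lemma exLE: "\<exists>t. LE t"
proof (rule ccontr)
  assume "\<not> (\<exists>t. LE t)"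
  then have P: "\<And>T. (\<forall>p. LS T p = El (snd (run act0 \<sigma> T) p)) \<and> Rm T = fst (run act0 \<sigma> T)"
    using pre by blast
  have "card (leaders n act0 lead0 \<sigma>) = 1"
    using sle val by (simp add: symmetric_leader_election_def)
  then obtain p where "p \<in> leaders n act0 lead0 \<sigma>" by (auto simp: card_Suc_eq)
  then obtain t where t: "pv t = p" "lead0 (obs act0 \<sigma> t)" by (auto simp: leaders_def)
  have "LE t" unfolding LE_def using P[of t] t run0_lt by (simp add: obs_def)
  then show False using \<open>\<not> (\<exists>t. LE t)\<close> by blast
qed


definition t0 :: nat where "t0 = (LEAST t. LE t)"
definition L :: nat where "L = pv t0"

lemma LE_t0: "LE t0" unfolding t0_def using exLE by (rule LeastI_ex)
lemma before_t0: "t < t0 \<Longrightarrow> \<not> LE t" unfolding t0_def by (rule not_less_Least)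

definition ES :: "nat set" where "ES = {t. isEl (LS t (pv t)) \<and> Rm t (kv t) < q}"
definition xsT :: "nat \<Rightarrow> (nat \<times> nat) list" where "xsT T = map \<sigma> (filter (\<lambda>t. t \<in> ES) [0..<T])"
definition tlS :: "nat \<Rightarrow> nat \<times> nat" where "tlS j = (j mod n, (j div n) mod r)"
definition ext :: "(nat \<times> nat) list \<Rightarrow> nat \<Rightarrow> nat \<times> nat" where
  "ext ys j = (if j < length ys then ys ! j else tlS (j - length ys))"
definition simT :: "nat \<Rightarrow> (nat \<Rightarrow> nat) \<times> (nat \<Rightarrow> nat list)" where
  "simT T = run act0 (ext (xsT T)) (length (xsT T))"

lemma xs_Suc: "xsT (Suc T) = (if T \<in> ES then xsT T @ [\<sigma> T] else xsT T)"
  by (simp add: xsT_def)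

lemma xs_prefix: "T \<le> T' \<Longrightarrow> \<exists>zs. xsT T' = xsT T @ zs"
proof (induction T' rule: dec_induct)
  case base then show ?case by simp
next
  case (step m) then show ?case by (auto simp: xs_Suc)
qed

lemma ext_agree: "j < length ys \<Longrightarrow> ext (ys @ zs) j = ext ys j"
  by (simp add: ext_def nth_append)

lemma run_ext_prefix: "run a (ext (ys @ zs)) (length ys) = run a (ext ys) (length ys)"
  by (rule run_agree) (simp add: ext_agree)

lemma ext_at: "ext (ys @ y # zs) (length ys) = y"
  by (simp add: ext_def nth_append)

lemma wr_nonEl: "\<not> isEl l \<Longrightarrow> s < q + 4 \<Longrightarrow> snd (dl l s) = s \<or> q \<le> snd (dl l s)"
  by (cases l) (auto simp: dL0_def dU_def kp_def)

lemma El_hi: "q \<le> s \<Longrightarrow> s < q + 4 \<Longrightarrow> q \<le> snd (dl (El xs) s) \<and> \<not> isEl (fst (dl (El xs) s))"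
  by (auto simp: dU_def kp_def)

lemma dL0_nonEl: "\<not> isEl (fst (dL0 c s))"
  by (auto simp: dL0_def)

lemma sim: "(\<forall>k. Rm T k < q \<longrightarrow> fst (simT T) k = Rm T k) \<and> (\<forall>p. isEl (LS T p) \<longrightarrow> snd (simT T) p = Hm T p)"
proof (induction T)
  case 0 then show ?case by (simp add: simT_def xsT_def Rm_0 Hm_def)
next
  case (Suc T)
  let ?p = "pv T" and ?k = "kv T" and ?s = "Rm T (kv T)"
  show ?case
  proof (cases "T \<in> ES")
    case True
    then obtain h where h: "LS T ?p = El h" and s: "?s < q" unfolding ES_def by (cases "LS T ?p") auto
    have hh: "h = Hm T ?p" using h loc_El unfolding LS_def by blast
    have sS: "simT (Suc T) = ((fst (simT T))(?k := act0 (snd (simT T) ?p @ [fst (simT T) ?k])),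
                (snd (simT T))(?p := snd (simT T) ?p @ [fst (simT T) ?k]))"
    proof -
      have "simT (Suc T) = run act0 (ext (xsT T @ [\<sigma> T])) (Suc (length (xsT T)))"
        using True by (simp add: simT_def xs_Suc)
      also have "\<dots> = ((fst (simT T))(?k := act0 (snd (simT T) ?p @ [fst (simT T) ?k])),
                (snd (simT T))(?p := snd (simT T) ?p @ [fst (simT T) ?k]))"
        unfolding run_Suc_gen using run_ext_prefix[of act0 "xsT T" "[\<sigma> T]"] ext_at[of "xsT T" "\<sigma> T" "[]"]
        by (simp add: simT_def del: run.simps)
      finally show ?thesis .
    qed
    have e1: "snd (simT T) ?p = Hm T ?p" using Suc.IH h by simp
    have e2: "fst (simT T) ?k = ?s" using Suc.IH s by simp
    show ?thesis
    proof (cases "lead0 (h @ [?s])")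
      case True
      have d: "dl (LS T ?p) ?s = dL0 0 ?s" using h s True by simp
      show ?thesis using Suc.IH d dL0_nonEl[of 0 ?s] s
        by (auto simp: sS Rm_Suc LS_Suc Hm_Suc dL0_def)
    next
      case False
      have d: "dl (LS T ?p) ?s = (El (h @ [?s]), act0 (h @ [?s]))" using h s False by simp
      show ?thesis using Suc.IH d e1 e2 hh
        by (auto simp: sS Rm_Suc LS_Suc Hm_Suc)
    qed
  next
    case False
    have sS: "simT (Suc T) = simT T" using False by (simp add: simT_def xs_Suc)
    have w: "(snd (dl (LS T ?p) ?s) = ?s \<and> ?s < q) \<or> q \<le> snd (dl (LS T ?p) ?s)"
    proof (cases "isEl (LS T ?p)")
      case True
      then obtain xs where "LS T ?p = El xs" by (cases "LS T ?p") auto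
      moreover have "q \<le> ?s" using False True unfolding ES_def by auto
      ultimately show ?thesis using El_hi[of ?s xs] Rm_lt by auto
    next
      case nE: False
      have "snd (dl (LS T ?p) ?s) = ?s \<or> q \<le> snd (dl (LS T ?p) ?s)" using wr_nonEl[OF nE Rm_lt[of T ?k]] .
      then show ?thesis by (metis not_le)
    qed
    have l: "\<not> isEl (fst (dl (LS T ?p) ?s))"
    proof (cases "isEl (LS T ?p)")
      case True
      then obtain xs where "LS T ?p = El xs" by (cases "LS T ?p") auto
      moreover have "q \<le> ?s" using False True unfolding ES_def by auto
      ultimately show ?thesis using El_hi[of ?s xs] Rm_lt by auto
    next
      case nE: False
      show ?thesis using notEl_stay[OF nE] by auto
    qed
    show ?thesis using Suc.IH w l sS by (auto simp: Rm_Suc LS_Suc Hm_Suc)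
  qed
qed

lemma ext_valid:
  assumes "\<forall>y\<in>set ys. fst y < n \<and> snd y < r"
  shows "valid_schedule n r (ext ys)"
proof -
  have A: "\<forall>t. fst (ext ys t) < n \<and> snd (ext ys t) < r"
    using assms n1 r1 by (auto simp: ext_def tlS_def)
  have B: "\<exists>t\<ge>N. ext ys t = (p, k)" if p: "p < n" and k: "k < r" for p k N
  proof -
    let ?j = "p + (N * r + k) * n"
    have "?j mod n = p" using p by simp
    moreover have "?j div n = N * r + k" using p by simp
    moreover have "(N * r + k) mod r = k" using k by simp
    ultimately have tl: "tlS ?j = (p, k)" by (simp add: tlS_def)
    have "N \<le> N * r" using r1 by simp
    also have "\<dots> \<le> N * r + k" by simp
    also have "\<dots> \<le> (N * r + k) * n" using n1 by simp
    finally have "N \<le> length ys + ?j" by simp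
    moreover have "ext ys (length ys + ?j) = (p, k)" using tl by (simp add: ext_def)
    ultimately show ?thesis by blast
  qed
  show ?thesis unfolding valid_schedule_def using A B by blast
qed

lemma xs_bounds: "\<forall>y\<in>set (xsT T). fst y < n \<and> snd y < r"
  using vb by (auto simp: xsT_def)

lemma LE_ES: "LE t \<Longrightarrow> t \<in> ES"
  by (auto simp: LE_def ES_def)

lemma LE_leader:
  assumes "LE t" and "t < Tf"
  shows "pv t \<in> leaders n act0 lead0 (ext (xsT Tf))"
proof -
  obtain zs where z: "xsT Tf = xsT (Suc t) @ zs" using xs_prefix[of "Suc t" Tf] assms(2) by auto
  have Y: "xsT Tf = xsT t @ \<sigma> t # zs" using z LE_ES[OF assms(1)] by (simp add: xs_Suc)
  let ?m = "length (xsT t)" and ?S = "ext (xsT Tf)"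
  have at: "?S ?m = \<sigma> t" using Y ext_at by simp
  have rr: "run act0 ?S ?m = simT t" unfolding Y simT_def using run_ext_prefix[of act0 "xsT t" "\<sigma> t # zs"] by simp
  obtain xs where xs: "LS t (pv t) = El xs" "Rm t (kv t) < q" "lead0 (xs @ [Rm t (kv t)])"
    using assms(1) by (auto simp: LE_def)
  have xh: "xs = Hm t (pv t)" using xs(1) loc_El unfolding LS_def by blast
  have "obs act0 ?S ?m = Hm t (pv t) @ [Rm t (kv t)]"
    using sim[of t] xs(1,2) at rr by (simp add: obs_def)
  then have "fst (?S ?m) = pv t \<and> lead0 (obs act0 ?S ?m)" using at xs xh by simp
  then show ?thesis using vb by (auto simp: leaders_def)
qed

lemma nonEl_mono:
  assumes a: "\<not> isEl (LS t p)" and b: "t \<le> t'"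
  shows "\<not> isEl (LS t' p)"
  using b
proof (induction t' rule: dec_induct)
  case base then show ?case using a .
next
  case (step m) then show ?case using notEl_stay by (auto simp: LS_Suc)
qed

lemma L_nonEl: "t0 < t \<Longrightarrow> \<not> isEl (LS t L)"
proof -
  assume a: "t0 < t"
  obtain xs where xs: "LS t0 L = El xs" "Rm t0 (kv t0) < q" "lead0 (xs @ [Rm t0 (kv t0)])"
    using LE_t0 by (auto simp: LE_def L_def)
  have "\<not> isEl (LS (Suc t0) L)" using xs dL0_nonEl by (simp add: LS_Suc L_def)
  then show ?thesis using nonEl_mono a by (simp add: Suc_le_eq)
qed

lemma LE_unique: "LE t \<Longrightarrow> t = t0"
proof (rule ccontr)
  assume a: "LE t" "t \<noteq> t0"
  have lt: "t0 < t" using a t0_def by (metis Least_le le_neq_implies_less)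
  have pE: "isEl (LS t (pv t))" using a(1) by (auto simp: LE_def)
  have ne: "pv t \<noteq> L" using L_nonEl[OF lt] pE by auto
  let ?S = "ext (xsT (Suc t))"
  have "L \<in> leaders n act0 lead0 ?S" using LE_leader[OF LE_t0] lt unfolding L_def by simp
  moreover have "pv t \<in> leaders n act0 lead0 ?S" using LE_leader[OF a(1)] by simp
  moreover have "card (leaders n act0 lead0 ?S) = 1"
    using sle ext_valid[OF xs_bounds] by (simp add: symmetric_leader_election_def)
  moreover have "finite (leaders n act0 lead0 ?S)" by (auto simp: leaders_def)
  ultimately show False using ne by (metis card_1_singletonE singletonD)
qed

end



context prun begin

definition Vs :: "nat \<Rightarrow> (nat \<times> nat) set" where "Vs T = \<sigma> ` {..<T}"

lemma Vs_Suc: "Vs (Suc T) = insert (\<sigma> T) (Vs T)"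
  by (auto simp: Vs_def lessThan_Suc)

lemma Inv_base: "Inv L (Rm (Suc t0)) (LS (Suc t0)) (Vs (Suc t0))"
proof -
  have P: "(\<forall>p. LS t0 p = El (snd (run act0 \<sigma> t0) p)) \<and> Rm t0 = fst (run act0 \<sigma> t0)"
    using pre before_t0 by blast
  have rl: "\<And>k. Rm t0 k < q" using P run0_lt by simp
  obtain xs where xs: "LS t0 L = El xs" "Rm t0 (kv t0) < q" "lead0 (xs @ [Rm t0 (kv t0)])"
    using LE_t0 by (auto simp: LE_def L_def)
  let ?LS = "(LS t0)(L := P0 0)"
  have I0: "Inv L (Rm t0) ?LS (Vs t0)"
    unfolding Inv_def
  proof (intro conjI)
    show "InvA L ?LS" using P vb(1)[of t0] unfolding InvA_def L_def by auto
    have "ph0 L 0 (Rm t0) ?LS (Vs t0)" unfolding ph0_def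
    proof (intro conjI)
      show "0 < r" using r1 by simp
      show "cnt (Rm t0) ((\<le>) q) = 0" by (rule cnt_zero) (use rl in \<open>simp add: not_le\<close>)
      show "\<forall>k<r. q \<le> Rm t0 k \<longrightarrow> Rm t0 k = q \<and> (L, k) \<in> Vs t0" using rl by (meson not_le)
      show "CHs ?LS = {}" using P by (auto simp: CHs_def)
    qed
    then show "case ?LS L of P0 c \<Rightarrow> ph0 L c (Rm t0) ?LS (Vs t0) | P1 i \<Rightarrow> ph1 L i (Rm t0) ?LS (Vs t0)
      | P2 c i \<Rightarrow> ph2 L c i (Rm t0) ?LS (Vs t0) \<and> (ph2a i (Rm t0) ?LS (Vs t0) \<or> ph2b i (Rm t0) ?LS (Vs t0))
      | P3 c i \<Rightarrow> ph3 L c i (Rm t0) ?LS (Vs t0) | Dn \<Rightarrow> phD L (Rm t0) ?LS (Vs t0) | _ \<Rightarrow> False" by simp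
  qed
  have st: "Inv L ((Rm t0)(kv t0 := snd (dl (?LS L) (Rm t0 (kv t0))))) (?LS(L := fst (dl (?LS L) (Rm t0 (kv t0))))) (insert (L, kv t0) (Vs t0))"
    by (rule Inv_step[OF I0 vb(1)[of t0, folded L_def] vb(2) Rm_lt]) simp
  have d: "dl (LS t0 L) (Rm t0 (kv t0)) = dl (P0 0) (Rm t0 (kv t0))" using xs by simp
  have sig: "\<sigma> t0 = (L, kv t0)" by (simp add: L_def)
  have e1: "Rm (Suc t0) = (Rm t0)(kv t0 := snd (dl (?LS L) (Rm t0 (kv t0))))"
    by (simp only: Rm_Suc[of t0] L_def[symmetric] d fun_upd_same)
  have e2: "LS (Suc t0) = ?LS(L := fst (dl (?LS L) (Rm t0 (kv t0))))"
    by (simp only: LS_Suc[of t0] L_def[symmetric] d fun_upd_same fun_upd_upd)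
  have e3: "Vs (Suc t0) = insert (L, kv t0) (Vs t0)" by (simp add: Vs_Suc L_def)
  show ?thesis unfolding e1 e2 e3 by (rule st)
qed

lemma Inv_all: "t0 < T \<Longrightarrow> Inv L (Rm T) (LS T) (Vs T)"
proof -
  assume "t0 < T"
  then have "Suc t0 \<le> T" by simp
  then show ?thesis
  proof (induction T rule: dec_induct)
    case base then show ?case by (rule Inv_base)
  next
    case (step m)
    have nl: "\<And>xs. pv m \<noteq> L \<Longrightarrow> LS m (pv m) = El xs \<Longrightarrow> Rm m (kv m) < q \<Longrightarrow> \<not> lead0 (xs @ [Rm m (kv m)])"
    proof
      fix xs assume a: "pv m \<noteq> L" "LS m (pv m) = El xs" "Rm m (kv m) < q" "lead0 (xs @ [Rm m (kv m)])"
      then have "LE m" by (auto simp: LE_def)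
      then have "m = t0" by (rule LE_unique)
      then show False using step.hyps by simp
    qed
    have "Inv L ((Rm m)(kv m := snd (dl (LS m (pv m)) (Rm m (kv m))))) ((LS m)(pv m := fst (dl (LS m (pv m)) (Rm m (kv m))))) (insert (pv m, kv m) (Vs m))"
      by (rule Inv_step[OF step.IH vb(1) vb(2) Rm_lt nl])
    then show ?case by (simp only: Rm_Suc LS_Suc Vs_Suc prod.collapse)
  qed
qed

lemma safety:
  assumes d: "declN (obs actN \<sigma> t)"
  shows "\<forall>p<n. \<forall>k<r. \<exists>t'\<le>t. \<sigma> t' = (p, k)"
proof -
  have D: "LS (Suc t) (pv t) = Dn" using d loc_obs by (simp add: declN_def)
  have lt: "t0 < Suc t"
  proof (rule ccontr)
    assume "\<not> t0 < Suc t"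
    then have "\<And>t'. t' < Suc t \<Longrightarrow> \<not> LE t'" using before_t0 by simp
    then have "LS (Suc t) (pv t) = El (snd (run act0 \<sigma> (Suc t)) (pv t))" using pre by blast
    then show False using D by simp
  qed
  have I: "Inv L (Rm (Suc t)) (LS (Suc t)) (Vs (Suc t))" by (rule Inv_all[OF lt])
  have IA: "InvA L (LS (Suc t))" using I by (simp add: Inv_def)
  have pL: "pv t = L"
  proof (rule ccontr)
    assume "pv t \<noteq> L"
    then have "isEU (LS (Suc t) (pv t)) \<or> isCh (LS (Suc t) (pv t))" using IA vb(1) by (simp add: InvA_def)
    then show False using D by simp
  qed
  have PD: "phD L (Rm (Suc t)) (LS (Suc t)) (Vs (Suc t))" using I D pL by (simp add: Inv_def)
  let ?C = "CHs (LS (Suc t))"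
  have sub: "?C \<subseteq> {..<n} - {L}" using L_notCh[OF IA] by (auto simp: CHs_def)
  have "card ({..<n} - {L}) = n - 1" using IA by (simp add: InvA_def)
  then have Ceq: "?C = {..<n} - {L}" using sub PD by (intro card_subset_eq) (auto simp: phD_def)
  have full_all: "full (Vs (Suc t)) p" if "p < n" for p
  proof (cases "p = L")
    case True then show ?thesis using PD by (simp add: phD_def)
  next
    case False
    then have "p \<in> ?C" using Ceq that by simp
    then show ?thesis using PD by (simp add: phD_def)
  qed
  show ?thesis
  proof (intro allI impI)
    fix p k assume "p < n" "k < r"
    then have "(p, k) \<in> Vs (Suc t)" using full_all by (simp add: full_def)
    then obtain t' where "t' < Suc t" "\<sigma> t' = (p, k)" by (auto simp: Vs_def)
    then show "\<exists>t'\<le>t. \<sigma> t' = (p, k)" by (intro exI[of _ t']) auto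
  qed
qed

definition Psi :: "nat \<Rightarrow> nat" where "Psi t = (\<Sum>p<n. mu (LS t p))"

lemma sum_upd: "finite A \<Longrightarrow> p \<in> A \<Longrightarrow> sum ((f :: nat \<Rightarrow> nat)(p := v)) A + f p = sum f A + v"
proof -
  assume a: "finite A" "p \<in> A"
  have "sum (f(p := v)) A = v + sum (f(p := v)) (A - {p})" using a by (simp add: sum.remove)
  moreover have "sum f A = f p + sum f (A - {p})" using a by (simp add: sum.remove)
  moreover have "sum (f(p := v)) (A - {p}) = sum f (A - {p})" by (rule sum.cong) auto
  ultimately show ?thesis by simp
qed

lemma Psi_Suc: "Psi (Suc t) + mu (LS t (pv t)) = Psi t + mu (LS (Suc t) (pv t))"
proof -
  define f where "f = (\<lambda>p. mu (LS t p))"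
  define v where "v = mu (LS (Suc t) (pv t))"
  have "Psi (Suc t) = sum (f(pv t := v)) {..<n}"
    unfolding Psi_def f_def v_def by (rule sum.cong) (auto simp: LS_Suc)
  moreover have "Psi t = sum f {..<n}" unfolding Psi_def f_def ..
  moreover have "sum (f(pv t := v)) {..<n} + f (pv t) = sum f {..<n} + v"
    using vb(1)[of t] by (intro sum_upd) auto
  ultimately show ?thesis unfolding f_def v_def by simp
qed

lemma Psi_le_Suc: "Psi t \<le> Psi (Suc t)"
proof -
  have "mu (LS t (pv t)) \<le> mu (LS (Suc t) (pv t))" using mu_mono[of "LS t (pv t)" "Rm t (kv t)"] by (simp add: LS_Suc)
  then show ?thesis using Psi_Suc[of t] by linarith
qed

lemma Psi_mono: "t \<le> t' \<Longrightarrow> Psi t \<le> Psi t'"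
  using Psi_le_Suc by (rule lift_Suc_mono_le)

lemma Psi_bound: "Psi t \<le> n * K"
proof -
  have "Psi t \<le> (\<Sum>p<n. K)" unfolding Psi_def by (rule sum_mono) (rule mu_le)
  then show ?thesis by simp
qed

lemma Psi_stab: "\<exists>N. \<forall>t\<ge>N. Psi t = Psi N"
proof (rule ccontr)
  assume H: "\<not> (\<exists>N. \<forall>t\<ge>N. Psi t = Psi N)"
  have "\<exists>N. j \<le> Psi N" for j
  proof (induction j)
    case 0 then show ?case by simp
  next
    case (Suc j)
    then obtain N where N: "j \<le> Psi N" by blast
    obtain t where t: "t \<ge> N" "Psi t \<noteq> Psi N" using H by blast
    then have "Psi N < Psi t" using Psi_mono[of N t] by simp
    then show ?case using N by (intro exI[of _ t]) simp
  qed
  then obtain N where "Suc (n * K) \<le> Psi N" by blast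
  then show False using Psi_bound[of N] by simp
qed

lemma noinc:
  assumes c: "\<forall>t\<ge>N. Psi t = Psi N" and t: "N \<le> t"
  shows "mu (fst (dl (LS t (pv t)) (Rm t (kv t)))) = mu (LS t (pv t))"
proof -
  have a: "Psi (Suc t) = Psi N" by (rule c[rule_format]) (use t in simp)
  have b: "Psi t = Psi N" by (rule c[rule_format]) (use t in simp)
  have m: "mu (LS (Suc t) (pv t)) = mu (fst (dl (LS t (pv t)) (Rm t (kv t))))" by (simp add: LS_Suc)
  show ?thesis using Psi_Suc[of t] a b m by linarith
qed

lemma noconv:
  assumes c: "\<forall>t\<ge>N. Psi t = Psi N" and t: "N \<le> t"
  shows "snd (dl (LS t (pv t)) (Rm t (kv t))) = Rm t (kv t) \<or> (Rm t (kv t) < q \<and> snd (dl (LS t (pv t)) (Rm t (kv t))) < q)"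
  using mu_same[OF noinc[OF c t] Rm_lt] by blast

lemma stall:
  assumes c: "\<forall>t\<ge>N. Psi t = Psi N" and t: "N \<le> t"
  shows "(\<forall>k. q \<le> Rm N k \<longrightarrow> Rm t k = Rm N k) \<and> (\<forall>k. Rm N k < q \<longrightarrow> Rm t k < q)
     \<and> (\<forall>p. \<not> isEU (LS N p) \<longrightarrow> LS t p = LS N p) \<and> (\<forall>p. isEU (LS N p) \<longrightarrow> isEU (LS t p))"
  using t
proof (induction t rule: dec_induct)
  case base then show ?case by simp
next
  case (step m)
  have ms: "(snd (dl (LS m (pv m)) (Rm m (kv m))) = Rm m (kv m) \<or> (Rm m (kv m) < q \<and> snd (dl (LS m (pv m)) (Rm m (kv m))) < q))
     \<and> (fst (dl (LS m (pv m)) (Rm m (kv m))) = LS m (pv m) \<or> (isEU (LS m (pv m)) \<and> isEU (fst (dl (LS m (pv m)) (Rm m (kv m))))))"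
    using mu_same[OF noinc[OF c step.hyps(1)] Rm_lt] .
  show ?case
  proof (intro conjI allI impI)
    fix k assume a: "q \<le> Rm N k"
    show "Rm (Suc m) k = Rm N k" using step.IH a ms by (auto simp: Rm_Suc)
  next
    fix k assume a: "Rm N k < q"
    show "Rm (Suc m) k < q" using step.IH a ms by (auto simp: Rm_Suc)
  next
    fix p assume a: "\<not> isEU (LS N p)"
    show "LS (Suc m) p = LS N p" using step.IH a ms by (auto simp: LS_Suc)
  next
    fix p assume a: "isEU (LS N p)"
    show "isEU (LS (Suc m) p)" using step.IH a ms by (auto simp: LS_Suc)
  qed
qed


lemma liveness: "\<exists>t. declN (obs actN \<sigma> t)"
proof -
  obtain N0 where c0: "\<forall>t\<ge>N0. Psi t = Psi N0" using Psi_stab by blast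
  define N where "N = max N0 (Suc t0)"
  have c: "\<forall>t\<ge>N. Psi t = Psi N"
  proof (intro allI impI)
    fix t assume "N \<le> t"
    then have "N0 \<le> t" "N0 \<le> N" unfolding N_def by auto
    then have "Psi t = Psi N0" "Psi N = Psi N0" using c0[rule_format] by blast+
    then show "Psi t = Psi N" by simp
  qed
  have I: "Inv L (Rm N) (LS N) (Vs N)" by (rule Inv_all) (simp add: N_def)
  have IA: "InvA L (LS N)" using I by (simp add: Inv_def)
  have Ln: "L < n" using IA by (simp add: InvA_def)
  have st: "\<And>t. N \<le> t \<Longrightarrow> (\<forall>k. q \<le> Rm N k \<longrightarrow> Rm t k = Rm N k) \<and> (\<forall>k. Rm N k < q \<longrightarrow> Rm t k < q)
     \<and> (\<forall>p. \<not> isEU (LS N p) \<longrightarrow> LS t p = LS N p) \<and> (\<forall>p. isEU (LS N p) \<longrightarrow> isEU (LS t p))"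
    using stall[OF c] by blast
  have cc: "\<And>t p k. N \<le> t \<Longrightarrow> \<sigma> t = (p, k) \<Longrightarrow> snd (dl (LS t p) (Rm t k)) = Rm t k \<or> (Rm t k < q \<and> snd (dl (LS t p) (Rm t k)) < q)"
    using noconv[OF c] by (metis fst_conv snd_conv)
  have nEUL: "\<not> isEU (LS N L)" using IA by (simp add: InvA_def)
  have visit: "\<And>p k. p < n \<Longrightarrow> k < r \<Longrightarrow> \<exists>t\<ge>N. \<sigma> t = (p, k)" by (rule vinf)
  show ?thesis
  proof (cases "LS N L")
    case Dn
    have k0: "0 < r" using r1 by simp
    obtain t where t: "t \<ge> N" "\<sigma> t = (L, 0)" using visit[OF Ln k0] by blast
    have "LS t L = Dn" using st[OF t(1)] nEUL Dn by simp
    then have "LS (Suc t) L = Dn" using t(2) by (simp add: LS_Suc)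
    then have "declN (obs actN \<sigma> t)" using loc_obs[of t] t(2) by (simp add: declN_def)
    then show ?thesis by blast
  next
    case (P0 c)
    have P: "ph0 L c (Rm N) (LS N) (Vs N)" using I P0 by (simp add: Inv_def)
    obtain k where k: "k < r" "\<not> q \<le> Rm N k" using cnt_ex[of "Rm N" "(\<le>) q"] P by (auto simp: ph0_def)
    obtain t where t: "t \<ge> N" "\<sigma> t = (L, k)" using visit[OF Ln k(1)] by blast
    have "Rm t k < q" "LS t L = P0 c" using st[OF t(1)] k nEUL P0 by auto
    then show ?thesis using cc[OF t] by (simp add: dL0_def)
  next
    case (P1 i)
    have P: "ph1 L i (Rm N) (LS N) (Vs N)" using I P1 by (simp add: Inv_def)
    have k: "0 < r" using r1 by simp
    obtain t where t: "t \<ge> N" "\<sigma> t = (L, 0)" using visit[OF Ln k] by blast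
    have "Rm t 0 = q" "LS t L = P1 i" using st[OF t(1)] P k nEUL P1 by (auto simp: ph1_def)
    then show ?thesis using cc[OF t] by simp
  next
    case (P3 c i)
    have P: "ph3 L c i (Rm N) (LS N) (Vs N)" using I P3 by (simp add: Inv_def)
    obtain k where k: "k < r" "Rm N k \<noteq> q" using cnt_ex[of "Rm N" "\<lambda>v. v = q"] P by (auto simp: ph3_def)
    then have kC: "Rm N k = q + 3" using P by (auto simp: ph3_def)
    obtain t where t: "t \<ge> N" "\<sigma> t = (L, k)" using visit[OF Ln k(1)] by blast
    have "Rm t k = q + 3" "LS t L = P3 c i" using st[OF t(1)] kC nEUL P3 by auto
    then show ?thesis using cc[OF t] by simp
  next
    case (P2 c i)
    have P: "ph2 L c i (Rm N) (LS N) (Vs N)" and P': "ph2a i (Rm N) (LS N) (Vs N) \<or> ph2b i (Rm N) (LS N) (Vs N)"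
      using I P2 by (auto simp: Inv_def)
    show ?thesis
    proof (cases "ph2a i (Rm N) (LS N) (Vs N)")
      case True
      obtain k where k: "k < r" "Rm N k = q + 1"
      proof (rule ccontr)
        assume "\<not> thesis"
        then have "\<And>k. k < r \<Longrightarrow> Rm N k \<noteq> q + 1" using that by blast
        then have "cnt (Rm N) (\<lambda>v. v = q + 1) = 0" by (intro cnt_zero) auto
        then show False using True by (simp add: ph2a_def)
      qed
      obtain p where p: "p < n" "p \<noteq> L" "p \<notin> CHs (LS N)"
      proof (rule ccontr)
        assume "\<not> thesis"
        then have "{..<n} - {L} \<subseteq> CHs (LS N)" using that by blast
        then have "card ({..<n} - {L}) \<le> card (CHs (LS N))" using CHs_fin by (rule card_mono[rotated])
        then show False using True P Ln by (auto simp: ph2a_def ph2_def)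
      qed
      have "isEU (LS N p)" using IA p by (auto simp: InvA_def CHs_def)
      then have eu: "isEU (LS t p)" if "N \<le> t" for t using st[OF that] by blast
      obtain t where t: "t \<ge> N" "\<sigma> t = (p, k)" using visit[OF p(1) k(1)] by blast
      have rk: "Rm t k = q + 1" using st[OF t(1)] k by auto
      have "snd (dl (LS t p) (q + 1)) = q + 2"
        using eu[OF t(1)] by (cases "LS t p") (auto simp: dU_def)
      then show ?thesis using cc[OF t] rk by simp
    next
      case False
      then have Pb: "ph2b i (Rm N) (LS N) (Vs N)" using P' by simp
      then obtain Pp cp where PP: "Pp \<in> CHs (LS N)" "LS N Pp = Ch cp" "cp \<le> r" "\<forall>k<r. Rm N k \<noteq> q + 1"
        "cnt (Rm N) (\<lambda>v. v = q + 2 \<or> v = q + 3) = cp"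
        unfolding ph2b_def by blast
      show ?thesis
      proof (cases "cp < r")
        case True
        obtain k where k: "k < r" "\<not> (Rm N k = q + 2 \<or> Rm N k = q + 3)"
          using cnt_ex[of "Rm N" "\<lambda>v. v = q + 2 \<or> v = q + 3"] PP(5) True by auto
        have rg: "q \<le> Rm N k \<and> Rm N k \<le> q + 3" using P k(1) by (simp add: ph2_def)
        have nT: "Rm N k \<noteq> q + 1" using PP(4) k(1) by simp
        have kB: "Rm N k = q" using k(2) rg nT by linarith
        have Pn: "Pp < n" using PP(1) by (simp add: CHs_def)
        obtain t where t: "t \<ge> N" "\<sigma> t = (Pp, k)" using visit[OF Pn k(1)] by blast
        have "Rm t k = q" "LS t Pp = Ch cp" using st[OF t(1)] kB PP(2) by auto
        then show ?thesis using cc[OF t] True by simp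
      next
        case False
        then have cpr: "cp = r" using PP(3) by simp
        have allMC: "\<And>k. k < r \<Longrightarrow> Rm N k = q + 2 \<or> Rm N k = q + 3"
          using cnt_all[of "Rm N" "\<lambda>v. v = q + 2 \<or> v = q + 3"] PP(5) cpr by auto
        obtain k where k: "k < r" "Rm N k \<noteq> q + 3"
          using cnt_ex[of "Rm N" "\<lambda>v. v = q + 3"] P by (auto simp: ph2_def)
        then have kM: "Rm N k = q + 2" using allMC by blast
        obtain t where t: "t \<ge> N" "\<sigma> t = (L, k)" using visit[OF Ln k(1)] by blast
        have "Rm t k = q + 2" "LS t L = P2 c i" using st[OF t(1)] kM nEUL P2 by auto
        then show ?thesis using cc[OF t] by simp
      qed
    qed
  qed (use IA in \<open>auto simp: InvA_def\<close>)
qed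

lemma win: "(\<exists>t. declN (obs actN \<sigma> t)) \<and> (\<forall>t. declN (obs actN \<sigma> t) \<longrightarrow> (\<forall>p<n. \<forall>k<r. \<exists>t'\<le>t. \<sigma> t' = (p, k)))"
  using liveness safety by blast

end

theorem mainTheorem7:
  fixes n r q :: nat
  assumes "n \<ge> 1" and "r \<ge> 1" and "q \<ge> 1"
    and "\<exists>act lead. symmetric_leader_election n r q act lead"
  shows "\<exists>act decl. symmetric_winning n r (q + 4) act decl"
proof -
  obtain act0 lead0 where sl: "symmetric_leader_election n r q act0 lead0" using assms(4) by blast
  interpret pset q n r act0 lead0 using assms(1-3) sl by unfold_locales
  have "symmetric_winning n r (q + 4) actN declN"
    unfolding symmetric_winning_def
  proof (rule conjI)
    show "uses_states (q + 4) actN" by (rule uses)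
  next
    show "\<forall>\<sigma>. valid_schedule n r \<sigma> \<longrightarrow> (\<exists>t. declN (obs actN \<sigma> t)) \<and> (\<forall>t. declN (obs actN \<sigma> t) \<longrightarrow> (\<forall>p<n. \<forall>k<r. \<exists>t'\<le>t. \<sigma> t' = (p, k)))"
    proof (intro allI impI)
      fix \<sigma> assume v: "valid_schedule n r \<sigma>"
      interpret prun q n r act0 lead0 \<sigma> by unfold_locales (rule v)
      show "(\<exists>t. declN (obs actN \<sigma> t)) \<and> (\<forall>t. declN (obs actN \<sigma> t) \<longrightarrow> (\<forall>p<n. \<forall>k<r. \<exists>t'\<le>t. \<sigma> t' = (p, k)))"
        by (rule win)
    qed
  qed
  then show ?thesis by blast
qed


end
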